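(* Let $\mathbf{X}_-\in\mathbb{R}^{n\times T}$, $\mathbf{U}_-\in\mathbb{R}^{m\times T}$, $\mathbf{X}_+\in\mathbb{R}^{n\times T}$ be data generated by $\mathbf{X}_+=A_\ast\mathbf{X}_-+B_\ast\mathbf{U}_-+\mathbf{W}_-$ for some (unknown) $A_\ast\in\mathbb{R}^{n\times n}$, $B_\ast\in\mathbb{R}^{n\times m}$ and noise matrix $\mathbf{W}_-\in\mathbb{R}^{n\times T}$ satisfying \[ \begin{bmatrix} I\\ \mathbf{W}_-^\top\end{bmatrix}^\top\begin{bmatrix}\Phi_{11}&\Phi_{12}\\ \Phi_{12}^\top&\Phi_{22}\end{bmatrix}\begin{bmatrix} I\\ \mathbf{W}_-^\top\end{bmatrix}\succeq 0 \] for some $\Phi\in\mathbb{S}^{n+T}$ with $\Phi_{11}\succeq 0$ and $\Phi_{22}\prec 0$. Let $C\in\mathbb{R}^{q\times n}$, $D\in\mathbb{R}^{q\times m}$, $E\in\mathbb{R}^{n\times z}$, and let $\mathcal{S}\subseteq\mathbb{R}^{m\times n}$ be a subspace with representation matrix $S$. Consider the semidefinite program: minimize (infimize) $\gamma$ over $P\in\mathbb{S}^n$, $Q\in\mathbb{S}^q$, $R\in\Upsilon(S)$, $L\in\mathcal{S}$, $\alpha,\beta,\gamma\in\mathbb{R}$ subject to \[ \begin{bmatrix} P-EE^\top-\beta I & \mathbf{0} & \mathbf{0} & \mathbf{0}\\ \mathbf{0} & \mathbf{0} & \mathbf{0} & R\\ \mathbf{0} & \mathbf{0} & \mathbf{0}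 & L\\ \mathbf{0} & R^\top & L^\top & R+R^\top-P \end{bmatrix}-\alpha\begin{bmatrix}\Psi & \mathbf{0}\\ \mathbf{0} & \mathbf{0}\end{bmatrix}\succeq 0, \] \[ \begin{bmatrix} Q & CR+DL\\ (CR+DL)^\top & R+R^\top-P\end{bmatrix}\succeq 0,\qquad \operatorname{Tr}(Q)\le\gamma^2,\qquad \alpha\ge 0,\ \beta>0,\ \gamma\ge 0, \] where in the first matrix the block rows/columns have sizes $n,n,m,n$ and $\Psi\in\mathbb{S}^{2n+m}$ occupies the first three block rows/columns. If this program is feasible with optimal value $\gamma^\ast$ (attained by $(P,Q,R,L,\alpha,\beta,\gamma^\ast)$), then $K=LR^{-1}\in\mathcal{S}$ is a $\gamma^\ast$-suboptimal $H_2$ controller for every system $(A,B)\in\Sigma_{\mathcal{D}}$, i.e. for every system $x(t+1)=Ax(t)+Bu(t)+E\xi(t)$, $y(t)=Cx(t)+Du(t)$ with $(A,B)\in\Sigma_{\mathcal{D}}$.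
   Context: $\mathbb{S}^n$ denotes real symmetric $n\times n$ matrices. For a system $x(t+1)=Ax(t)+Bu(t)+E\xi(t)$, $y(t)=Cx(t)+Du(t)$ and a static feedback $u=Kx$, let $G_K(z)$ be the transfer function from $\xi$ to $y$ of the closed loop $x(t+1)=(A+BK)x(t)+E\xi(t)$, $y(t)=(C+DK)x(t)$; $K$ is a $\gamma$-suboptimal $H_2$ controller if $\|G_K(z)\|_{H_2}\le\gamma$. If $S_1,\dots,S_k\in\mathbb{R}^{m\times n}$ form a basis of $\mathcal{S}$, $S=[S_1\ \cdots\ S_k]\in\mathbb{R}^{m\times nk}$ is a representation matrix of $\mathcal{S}$, and $\Upsilon(S):=\{R\in\mathbb{R}^{n\times n}\mid\exists\Lambda\in\mathbb{S}^k:\ S(I_k\otimes R)=S(\Lambda\otimes I_n)\}$ ($\otimes$ the Kronecker product). Define \[ \Psi:=\begin{bmatrix} I & \mathbf{X}_+\\ \mathbf{0} & -\mathbf{X}_-\\ \mathbf{0} & -\mathbf{U}_-\end{bmatrix}^\top\Phi\begin{bmatrix} I & \mathbf{X}_+\\ \mathbf{0} & -\mathbf{X}_-\\ \mathbf{0} & -\mathbf{U}_-\end{bmatrix}\in\mathbb{S}^{2n+m}, \] and $\Sigma_{\mathcal{D}}:=\{(A,B)\mid [I\ \ A\ \ B]\,\Psi\,[I\ \ A\ \ B]^\top\succeq 0\}$, i.e. the set of $(A,B)\in\mathbb{R}^{n\times n}\times\mathbb{R}^{n\times m}$ with $\begin{bmatrix} I\\ A^\top\\ B^\top\end{bmatrix}^\top\Psi\begin{bmatrix}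 I\\ A^\top\\ B^\top\end{bmatrix}\succeq 0$. *)

theory Defs
  imports "Jordan_Normal_Form.Gauss_Jordan_Elimination"
begin

definition sym_mat :: "nat \<Rightarrow> real mat \<Rightarrow> bool" where
  "sym_mat n M \<longleftrightarrow> M \<in> carrier_mat n n \<and> transpose_mat M = M"

definition psd :: "nat \<Rightarrow> real mat \<Rightarrow> bool" where
  "psd n M \<longleftrightarrow> sym_mat n M \<and> (\<forall>v \<in> carrier_vec n. v \<bullet> (M *\<^sub>v v) \<ge> 0)"

definition neg_def :: "nat \<Rightarrow> real mat \<Rightarrow> bool" where
  "neg_def n M \<longleftrightarrow> sym_mat n M \<and> (\<forall>v \<in> carrier_vec n. v \<noteq> 0\<^sub>v n \<longrightarrow> v \<bullet> (M *\<^sub>v v) < 0)"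

definition trace_mat :: "real mat \<Rightarrow> real" where
  "trace_mat M = (\<Sum>i<dim_row M. M $$ (i, i))"

definition append_cols :: "real mat \<Rightarrow> real mat \<Rightarrow> real mat" where
  "append_cols A B = four_block_mat A B (0\<^sub>m 0 (dim_col A)) (0\<^sub>m 0 (dim_col B))"

definition kron :: "real mat \<Rightarrow> real mat \<Rightarrow> real mat" where
  "kron A B = mat (dim_row A * dim_row B) (dim_col A * dim_col B)
     (\<lambda>(i, j). A $$ (i div dim_row B, j div dim_col B) * B $$ (i mod dim_row B, j mod dim_col B))"

definition frob_sq :: "real mat \<Rightarrow> real" where
  "frob_sq M = (\<Sum>i<dim_row M. \<Sum>j<dim_col M. (M $$ (i, j))\<^sup>2)"

text \<open>Closed loop x(t+1) = (A+BK)x(t) + E xi(t), y(t) = (C+DK)x(t).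
  Its transfer function G_K(z) = (C+DK)(zI-(A+BK))^{-1}E has impulse response
  (Markov parameters) G_0 = 0, G_{t+1} = (C+DK)(A+BK)^t E.  The H2 norm is the
  l2 norm of the impulse response (equal to the frequency-domain H2 norm by Parseval);
  it is infinite when the impulse response is not square summable.\<close>
definition markov :: "real mat \<Rightarrow> real mat \<Rightarrow> real mat \<Rightarrow> real mat \<Rightarrow> real mat \<Rightarrow> real mat \<Rightarrow> nat \<Rightarrow> real mat" where
  "markov A B C D E K t = (C + D * K) * ((A + B * K) ^\<^sub>m t) * E"

definition h2_finite :: "real mat \<Rightarrow> real mat \<Rightarrow> real mat \<Rightarrow> real mat \<Rightarrow> real mat \<Rightarrow> real mat \<Rightarrow> bool" where
  "h2_finite A B C D E K \<longleftrightarrow> summable (\<lambda>t. frob_sq (markov A B C D E K t))"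

definition h2_norm :: "real mat \<Rightarrow> real mat \<Rightarrow> real mat \<Rightarrow> real mat \<Rightarrow> real mat \<Rightarrow> real mat \<Rightarrow> real" where
  "h2_norm A B C D E K = sqrt (\<Sum>t. frob_sq (markov A B C D E K t))"

definition h2_suboptimal :: "real mat \<Rightarrow> real mat \<Rightarrow> real mat \<Rightarrow> real mat \<Rightarrow> real mat \<Rightarrow> real mat \<Rightarrow> real \<Rightarrow> bool" where
  "h2_suboptimal A B C D E K \<gamma> \<longleftrightarrow> h2_finite A B C D E K \<and> h2_norm A B C D E K \<le> \<gamma>"

definition mat_span :: "nat \<Rightarrow> (nat \<Rightarrow> real mat) \<Rightarrow> nat \<Rightarrow> nat \<Rightarrow> real mat set" where
  "mat_span k Ss m n = {M. M \<in> carrier_mat m n \<and>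
      (\<exists>c :: nat \<Rightarrow> real. M = mat m n (\<lambda>(i, j). \<Sum>l<k. c l * Ss l $$ (i, j)))}"

definition mat_lin_indep :: "nat \<Rightarrow> (nat \<Rightarrow> real mat) \<Rightarrow> nat \<Rightarrow> nat \<Rightarrow> bool" where
  "mat_lin_indep k Ss m n \<longleftrightarrow> (\<forall>c :: nat \<Rightarrow> real.
      mat m n (\<lambda>(i, j). \<Sum>l<k. c l * Ss l $$ (i, j)) = 0\<^sub>m m n \<longrightarrow> (\<forall>l<k. c l = 0))"

definition is_basis_of :: "nat \<Rightarrow> (nat \<Rightarrow> real mat) \<Rightarrow> nat \<Rightarrow> nat \<Rightarrow> real mat set \<Rightarrow> bool" where
  "is_basis_of k Ss m n \<S> \<longleftrightarrow> (\<forall>l<k. Ss l \<in> carrier_mat m n) \<and> mat_lin_indep k Ss m n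
      \<and> \<S> = mat_span k Ss m n"

definition rep_mat :: "nat \<Rightarrow> (nat \<Rightarrow> real mat) \<Rightarrow> nat \<Rightarrow> nat \<Rightarrow> real mat" where
  "rep_mat k Ss m n = mat m (n * k) (\<lambda>(i, j). Ss (j div n) $$ (i, j mod n))"

definition Upsilon :: "nat \<Rightarrow> nat \<Rightarrow> real mat \<Rightarrow> real mat set" where
  "Upsilon k n S = {R. R \<in> carrier_mat n n \<and>
      (\<exists>\<Lambda>. sym_mat k \<Lambda> \<and> S * kron (1\<^sub>m k) R = S * kron \<Lambda> (1\<^sub>m n))}"

definition Psi_mat :: "nat \<Rightarrow> nat \<Rightarrow> nat \<Rightarrow> real mat \<Rightarrow> real mat \<Rightarrow> real mat \<Rightarrow> real mat \<Rightarrow> real mat" where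
  "Psi_mat n m T Xp Xm Um \<Phi> =
     (let M = append_cols (1\<^sub>m n) Xp @\<^sub>r append_cols (0\<^sub>m n n) (- Xm) @\<^sub>r append_cols (0\<^sub>m m n) (- Um)
      in M * \<Phi> * transpose_mat M)"

definition Sigma_D :: "nat \<Rightarrow> nat \<Rightarrow> real mat \<Rightarrow> (real mat \<times> real mat) set" where
  "Sigma_D n m \<Psi> = {(A, B). A \<in> carrier_mat n n \<and> B \<in> carrier_mat n m \<and>
      (let N = append_cols (append_cols (1\<^sub>m n) A) B in psd n (N * \<Psi> * transpose_mat N))}"

definition sdp_feasible ::
  "nat \<Rightarrow> nat \<Rightarrow> nat \<Rightarrow> nat \<Rightarrow> real mat \<Rightarrow> real mat \<Rightarrow> real mat \<Rightarrow> real mat \<Rightarrow> real mat set \<Rightarrow> real mat \<Rightarrow>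
   real mat \<Rightarrow> real mat \<Rightarrow> real mat \<Rightarrow> real mat \<Rightarrow> real \<Rightarrow> real \<Rightarrow> real \<Rightarrow> bool" where
  "sdp_feasible n m q k C D E \<Psi> \<S> S P Q R L \<alpha> \<beta> \<gamma> \<longleftrightarrow>
     sym_mat n P \<and> sym_mat q Q \<and> R \<in> Upsilon k n S \<and> L \<in> \<S> \<and>
     (let Z = R + transpose_mat R - P;
          TL = four_block_mat (P - E * transpose_mat E - \<beta> \<cdot>\<^sub>m 1\<^sub>m n) (0\<^sub>m n (n + m))
                              (0\<^sub>m (n + m) n) (0\<^sub>m (n + m) (n + m));
          Col = 0\<^sub>m n n @\<^sub>r R @\<^sub>r L;
          Big = four_block_mat TL Col (transpose_mat Col) Z;
          PsiBig = four_block_mat \<Psi> (0\<^sub>m (2 * n + m) n) (0\<^sub>m n (2 * n + m)) (0\<^sub>m n n);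
          CL = C * R + D * L
      in psd (3 * n + m) (Big - \<alpha> \<cdot>\<^sub>m PsiBig) \<and>
         psd (q + n) (four_block_mat Q CL (transpose_mat CL) Z)) \<and>
     trace_mat Q \<le> \<gamma>\<^sup>2 \<and> \<alpha> \<ge> 0 \<and> \<beta> > 0 \<and> \<gamma> \<ge> 0"

end

theory Submission
  imports Defs "Jordan_Normal_Form.Determinant"
begin

lemma append_vec_zero_dim: "w \<in> carrier_vec 0 \<Longrightarrow> (v::'a vec) @\<^sub>v w = v"
  by (intro eq_vecI, auto)

lemma append_vec_assoc: "((a::'a vec) @\<^sub>v b) @\<^sub>v c = a @\<^sub>v (b @\<^sub>v c)"
  by (intro eq_vecI, auto)

lemma append_vec_add:
  fixes a b c d :: "real vec"
  assumes "a \<in> carrier_vec n1" "c \<in> carrier_vec n1" "b \<in> carrier_vec n2" "d \<in> carrier_vec n2"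
  shows "(a @\<^sub>v b) + (c @\<^sub>v d) = (a + c) @\<^sub>v (b + d)"
  using assms by (intro eq_vecI, auto)

lemma smult_mat_mult_vec:
  fixes A :: "real mat"
  assumes "A \<in> carrier_mat nr nc" "v \<in> carrier_vec nc"
  shows "(k \<cdot>\<^sub>m A) *\<^sub>v v = k \<cdot>\<^sub>v (A *\<^sub>v v)"
  using assms by (intro eq_vecI, auto)

lemma quad_four_block:
  fixes A B C D :: "real mat"
  assumes "A \<in> carrier_mat n1 n1" "B \<in> carrier_mat n1 n2" "C \<in> carrier_mat n2 n1" "D \<in> carrier_mat n2 n2"
    "a \<in> carrier_vec n1" "d \<in> carrier_vec n2"
  shows "(a @\<^sub>v d) \<bullet> (four_block_mat A B C D *\<^sub>v (a @\<^sub>v d)) =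
     a \<bullet> (A *\<^sub>v a) + a \<bullet> (B *\<^sub>v d) + d \<bullet> (C *\<^sub>v a) + d \<bullet> (D *\<^sub>v d)"
  using assms
  by (simp add: four_block_mat_mult_vec scalar_prod_append scalar_prod_add_distrib[of _ n1] scalar_prod_add_distrib[of _ n2])

lemma append_cols_mult_vec:
  fixes X Y :: "real mat"
  assumes "X \<in> carrier_mat r c1" "Y \<in> carrier_mat r c2" "a \<in> carrier_vec c1" "d \<in> carrier_vec c2"
  shows "append_cols X Y *\<^sub>v (a @\<^sub>v d) = X *\<^sub>v a + Y *\<^sub>v d"
proof -
  have "append_cols X Y *\<^sub>v (a @\<^sub>v d) = (X *\<^sub>v a + Y *\<^sub>v d) @\<^sub>v (0\<^sub>m 0 c1 *\<^sub>v a + 0\<^sub>m 0 c2 *\<^sub>v d)"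
    unfolding append_cols_def carrier_matD(2)[OF assms(1)] carrier_matD(2)[OF assms(2)]
    using assms by (intro four_block_mat_mult_vec, auto)
  moreover have "0\<^sub>m 0 c1 *\<^sub>v a + 0\<^sub>m 0 c2 *\<^sub>v d \<in> carrier_vec 0" by (rule carrier_vecI, simp)
  ultimately show ?thesis using append_vec_zero_dim by metis
qed

lemma transpose_append_cols:
  fixes X Y :: "real mat"
  assumes "X \<in> carrier_mat r c1" "Y \<in> carrier_mat r c2"
  shows "transpose_mat (append_cols X Y) = transpose_mat X @\<^sub>r transpose_mat Y"
  using assms unfolding append_cols_def append_rows_def
  by (subst transpose_four_block_mat[of _ r c1 _ c2 _ 0], auto)

lemma transpose_append_rows:
  fixes X Y :: "real mat"
  assumes "X \<in> carrier_mat r1 c" "Y \<in> carrier_mat r2 c"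
  shows "transpose_mat (X @\<^sub>r Y) = append_cols (transpose_mat X) (transpose_mat Y)"
  using assms unfolding append_cols_def append_rows_def
  by (subst transpose_four_block_mat[of _ r1 c _ 0 _ r2], auto)

lemma carrier_append_cols[simp]:
  "X \<in> carrier_mat r c1 \<Longrightarrow> Y \<in> carrier_mat r c2 \<Longrightarrow> append_cols X Y \<in> carrier_mat r (c1 + c2)"
  unfolding append_cols_def by auto

lemma transpose_append_cols_vec:
  fixes X Y :: "real mat"
  assumes "X \<in> carrier_mat r c1" "Y \<in> carrier_mat r c2" "x \<in> carrier_vec r"
  shows "transpose_mat (append_cols X Y) *\<^sub>v x = (transpose_mat X *\<^sub>v x) @\<^sub>v (transpose_mat Y *\<^sub>v x)"
  using assms by (simp add: transpose_append_cols mat_mult_append[of _ c1 r _ c2])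

lemma transpose_append_rows_vec:
  fixes X Y :: "real mat"
  assumes "X \<in> carrier_mat r1 c" "Y \<in> carrier_mat r2 c" "a \<in> carrier_vec r1" "d \<in> carrier_vec r2"
  shows "transpose_mat (X @\<^sub>r Y) *\<^sub>v (a @\<^sub>v d) = transpose_mat X *\<^sub>v a + transpose_mat Y *\<^sub>v d"
  using assms by (simp add: transpose_append_rows append_cols_mult_vec[of _ c r1 _ r2])

lemma quad_congr:
  fixes M G :: "real mat"
  assumes "M \<in> carrier_mat a b" "G \<in> carrier_mat b b" "x \<in> carrier_vec a"
  shows "x \<bullet> ((M * G * transpose_mat M) *\<^sub>v x) = (transpose_mat M *\<^sub>v x) \<bullet> (G *\<^sub>v (transpose_mat M *\<^sub>v x))"
proof -
  have "(M * G * transpose_mat M) *\<^sub>v x = M *\<^sub>v (G *\<^sub>v (transpose_mat M *\<^sub>v x))"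
    using assms by (simp add: assoc_mult_mat_vec[of _ a b _ a])
  moreover have "x \<bullet> (M *\<^sub>v (G *\<^sub>v (transpose_mat M *\<^sub>v x))) = (transpose_mat M *\<^sub>v x) \<bullet> (G *\<^sub>v (transpose_mat M *\<^sub>v x))"
    using transpose_vec_mult_scalar[of M a b "G *\<^sub>v (transpose_mat M *\<^sub>v x)" x] assms by simp
  ultimately show ?thesis by simp
qed

lemma N_transpose_vec:
  fixes A B :: "real mat"
  assumes "A \<in> carrier_mat n n" "B \<in> carrier_mat n m" "x \<in> carrier_vec n"
  shows "transpose_mat (append_cols (append_cols (1\<^sub>m n) A) B) *\<^sub>v x
       = x @\<^sub>v ((transpose_mat A *\<^sub>v x) @\<^sub>v (transpose_mat B *\<^sub>v x))"
proof -
  have c1: "append_cols (1\<^sub>m n) A \<in> carrier_mat n (n + n)" using assms by auto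
  have "transpose_mat (append_cols (append_cols (1\<^sub>m n) A) B) *\<^sub>v x
      = (transpose_mat (append_cols (1\<^sub>m n) A) *\<^sub>v x) @\<^sub>v (transpose_mat B *\<^sub>v x)"
    by (rule transpose_append_cols_vec[OF c1 assms(2,3)])
  also have "transpose_mat (append_cols (1\<^sub>m n) A) *\<^sub>v x = (transpose_mat (1\<^sub>m n) *\<^sub>v x) @\<^sub>v (transpose_mat A *\<^sub>v x)"
    by (rule transpose_append_cols_vec[OF one_carrier_mat assms(1,3)])
  finally show ?thesis using assms by (simp add: append_vec_assoc)
qed

lemma sigma_quad:
  fixes A B \<Psi> :: "real mat"
  assumes "(A, B) \<in> Sigma_D n m \<Psi>" "\<Psi> \<in> carrier_mat (n + (n + m)) (n + (n + m))" "x \<in> carrier_vec n"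
  shows "0 \<le> (x @\<^sub>v ((transpose_mat A *\<^sub>v x) @\<^sub>v (transpose_mat B *\<^sub>v x))) \<bullet>
              (\<Psi> *\<^sub>v (x @\<^sub>v ((transpose_mat A *\<^sub>v x) @\<^sub>v (transpose_mat B *\<^sub>v x))))"
proof -
  let ?N = "append_cols (append_cols (1\<^sub>m n) A) B"
  from assms(1) have A: "A \<in> carrier_mat n n" and B: "B \<in> carrier_mat n m"
    and ps: "psd n (?N * \<Psi> * transpose_mat ?N)"
    unfolding Sigma_D_def by (auto simp: Let_def)
  have Nc: "?N \<in> carrier_mat n (n + n + m)" using A B by auto
  have Pc: "\<Psi> \<in> carrier_mat (n + n + m) (n + n + m)" using assms(2) by (simp add: add.assoc)
  have "0 \<le> x \<bullet> ((?N * \<Psi> * transpose_mat ?N) *\<^sub>v x)" using ps assms(3) unfolding psd_def by auto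
  also have "\<dots> = (transpose_mat ?N *\<^sub>v x) \<bullet> (\<Psi> *\<^sub>v (transpose_mat ?N *\<^sub>v x))"
    by (rule quad_congr[OF Nc Pc assms(3)])
  finally show ?thesis using N_transpose_vec[OF A B assms(3)] by simp
qed

lemma sym_congr:
  fixes M G :: "real mat"
  assumes "M \<in> carrier_mat a b" "G \<in> carrier_mat b b" "transpose_mat G = G"
  shows "transpose_mat (M * G * transpose_mat M) = M * G * transpose_mat M"
proof -
  have "transpose_mat (M * G * transpose_mat M) = transpose_mat (transpose_mat M) * transpose_mat (M * G)"
    using assms by (intro transpose_mult[of _ a b _ a], auto)
  also have "transpose_mat (M * G) = transpose_mat G * transpose_mat M"
    using assms by (intro transpose_mult[of _ a b _ b], auto)
  finally show ?thesis using assms by (simp add: assoc_mult_mat[of _ a b _ b _ a])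
qed

lemma zero_mat_mult_vec: "(v :: real vec) \<in> carrier_vec nc \<Longrightarrow> 0\<^sub>m nr nc *\<^sub>v v = 0\<^sub>v nr"
  by (intro eq_vecI, auto)

lemma sigma_star:
  fixes Xm Um Xp Ast Bst Wm \<Phi> :: "real mat"
  assumes data: "Xm \<in> carrier_mat n T" "Um \<in> carrier_mat m T" "Xp \<in> carrier_mat n T"
    and truesys: "Ast \<in> carrier_mat n n" "Bst \<in> carrier_mat n m" "Wm \<in> carrier_mat n T"
      "Xp = Ast * Xm + Bst * Um + Wm"
    and Phi: "sym_mat (n + T) \<Phi>"
    and noise: "psd n (append_cols (1\<^sub>m n) Wm * \<Phi> * transpose_mat (append_cols (1\<^sub>m n) Wm))"
  shows "(Ast, Bst) \<in> Sigma_D n m (Psi_mat n m T Xp Xm Um \<Phi>)"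
proof -
  let ?X1 = "append_cols (1\<^sub>m n) Xp" and ?X2 = "append_cols (0\<^sub>m n n) (- Xm)"
    and ?X3 = "append_cols (0\<^sub>m m n) (- Um)"
  let ?M = "?X1 @\<^sub>r ?X2 @\<^sub>r ?X3"
  let ?N = "append_cols (append_cols (1\<^sub>m n) Ast) Bst"
  let ?W = "append_cols (1\<^sub>m n) Wm"
  have Phc: "\<Phi> \<in> carrier_mat (n + T) (n + T)" "transpose_mat \<Phi> = \<Phi>" using Phi unfolding sym_mat_def by auto
  have X1: "?X1 \<in> carrier_mat n (n + T)" using data by auto
  have X2: "?X2 \<in> carrier_mat n (n + T)" using data by auto
  have X3: "?X3 \<in> carrier_mat m (n + T)" using data by auto
  have X23: "?X2 @\<^sub>r ?X3 \<in> carrier_mat (n + m) (n + T)" using X2 X3 by auto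
  have Mc: "?M \<in> carrier_mat (n + (n + m)) (n + T)" using X1 X23 by auto
  have Psi: "Psi_mat n m T Xp Xm Um \<Phi> = ?M * \<Phi> * transpose_mat ?M"
    unfolding Psi_mat_def Let_def ..
  have Psc: "?M * \<Phi> * transpose_mat ?M \<in> carrier_mat (n + (n + m)) (n + (n + m))" using Mc Phc by auto
  have PsT: "transpose_mat (?M * \<Phi> * transpose_mat ?M) = ?M * \<Phi> * transpose_mat ?M"
    by (rule sym_congr[OF Mc Phc])
  have "?N \<in> carrier_mat n (n + n + m)"
    by (intro carrier_append_cols one_carrier_mat truesys(1,2))
  hence Nc: "?N \<in> carrier_mat n (n + (n + m))" by (simp add: add.assoc)
  have Wc: "?W \<in> carrier_mat n (n + T)" using truesys by auto
  have key: "transpose_mat ?M *\<^sub>v (transpose_mat ?N *\<^sub>v x) = transpose_mat ?W *\<^sub>v x"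
    if x: "x \<in> carrier_vec n" for x
  proof -
    let ?y2 = "transpose_mat Ast *\<^sub>v x" and ?y3 = "transpose_mat Bst *\<^sub>v x"
    have y2: "?y2 \<in> carrier_vec n" and y3: "?y3 \<in> carrier_vec m" using truesys x by auto
    have "transpose_mat ?M *\<^sub>v (transpose_mat ?N *\<^sub>v x) = transpose_mat ?M *\<^sub>v (x @\<^sub>v (?y2 @\<^sub>v ?y3))"
      using N_transpose_vec[OF truesys(1,2) x] by simp
    also have "\<dots> = transpose_mat ?X1 *\<^sub>v x + transpose_mat (?X2 @\<^sub>r ?X3) *\<^sub>v (?y2 @\<^sub>v ?y3)"
      by (rule transpose_append_rows_vec[OF X1 X23 x], insert y2 y3, auto)
    also have "transpose_mat (?X2 @\<^sub>r ?X3) *\<^sub>v (?y2 @\<^sub>v ?y3) = transpose_mat ?X2 *\<^sub>v ?y2 + transpose_mat ?X3 *\<^sub>v ?y3"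
      by (rule transpose_append_rows_vec[OF X2 X3 y2 y3])
    also have "transpose_mat ?X1 *\<^sub>v x = x @\<^sub>v (transpose_mat Xp *\<^sub>v x)"
      using transpose_append_cols_vec[OF one_carrier_mat data(3) x] x by simp
    also have "transpose_mat ?X2 *\<^sub>v ?y2 = 0\<^sub>v n @\<^sub>v (- (transpose_mat Xm *\<^sub>v ?y2))"
      using transpose_append_cols_vec[OF zero_carrier_mat[of n n] uminus_carrier_mat[OF data(1)] y2] y2 data truesys
      by (simp add: transpose_uminus zero_mat_mult_vec)
    also have "transpose_mat ?X3 *\<^sub>v ?y3 = 0\<^sub>v n @\<^sub>v (- (transpose_mat Um *\<^sub>v ?y3))"
      using transpose_append_cols_vec[OF zero_carrier_mat[of m n] uminus_carrier_mat[OF data(2)] y3] y3 data truesys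
      by (simp add: transpose_uminus zero_mat_mult_vec)
    also have "transpose_mat Xp *\<^sub>v x = transpose_mat Xm *\<^sub>v ?y2 + transpose_mat Um *\<^sub>v ?y3 + transpose_mat Wm *\<^sub>v x"
    proof -
      have "transpose_mat Xp = transpose_mat Xm * transpose_mat Ast + transpose_mat Um * transpose_mat Bst + transpose_mat Wm"
        using truesys data by (simp add: transpose_add[of _ n T] transpose_mult[of _ n n _ T] transpose_mult[of _ n m _ T])
      thus ?thesis using truesys data x
        by (simp add: add_mult_distrib_mat_vec[of _ T n] assoc_mult_mat_vec[of _ T n _ n])
    qed
    also have "(x @\<^sub>v (transpose_mat Xm *\<^sub>v ?y2 + transpose_mat Um *\<^sub>v ?y3 + transpose_mat Wm *\<^sub>v x)) +
        ((0\<^sub>v n @\<^sub>v (- (transpose_mat Xm *\<^sub>v ?y2))) + (0\<^sub>v n @\<^sub>v (- (transpose_mat Um *\<^sub>v ?y3))))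
        = x @\<^sub>v (transpose_mat Wm *\<^sub>v x)"
      using x y2 y3 data truesys by (intro eq_vecI, auto)
    also have "\<dots> = transpose_mat ?W *\<^sub>v x"
      using transpose_append_cols_vec[OF one_carrier_mat truesys(3) x] x by simp
    finally show ?thesis .
  qed
  have "psd n (?N * (?M * \<Phi> * transpose_mat ?M) * transpose_mat ?N)"
    unfolding psd_def sym_mat_def
  proof (intro conjI ballI)
    show "?N * (?M * \<Phi> * transpose_mat ?M) * transpose_mat ?N \<in> carrier_mat n n" using Nc Psc by auto
    show "transpose_mat (?N * (?M * \<Phi> * transpose_mat ?M) * transpose_mat ?N) = ?N * (?M * \<Phi> * transpose_mat ?M) * transpose_mat ?N"
      by (rule sym_congr[OF Nc Psc PsT])
    fix x :: "real vec" assume x: "x \<in> carrier_vec n"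
    have Ntx: "transpose_mat ?N *\<^sub>v x \<in> carrier_vec (n + (n + m))" using Nc x by auto
    have "x \<bullet> ((?N * (?M * \<Phi> * transpose_mat ?M) * transpose_mat ?N) *\<^sub>v x)
        = (transpose_mat ?N *\<^sub>v x) \<bullet> ((?M * \<Phi> * transpose_mat ?M) *\<^sub>v (transpose_mat ?N *\<^sub>v x))"
      by (rule quad_congr[OF Nc Psc x])
    also have "\<dots> = (transpose_mat ?M *\<^sub>v (transpose_mat ?N *\<^sub>v x)) \<bullet> (\<Phi> *\<^sub>v (transpose_mat ?M *\<^sub>v (transpose_mat ?N *\<^sub>v x)))"
      by (rule quad_congr[OF Mc Phc(1) Ntx])
    also have "\<dots> = (transpose_mat ?W *\<^sub>v x) \<bullet> (\<Phi> *\<^sub>v (transpose_mat ?W *\<^sub>v x))" using key[OF x] by simp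
    also have "\<dots> = x \<bullet> ((?W * \<Phi> * transpose_mat ?W) *\<^sub>v x)"
      by (rule quad_congr[OF Wc Phc(1) x, symmetric])
    finally show "0 \<le> x \<bullet> ((?N * (?M * \<Phi> * transpose_mat ?M) * transpose_mat ?N) *\<^sub>v x)"
      using noise x unfolding psd_def by auto
  qed
  thus ?thesis unfolding Sigma_D_def Psi using truesys by (auto simp: Let_def)
qed

lemma lmi1_eval:
  fixes X \<Psi> R L Z A B :: "real mat" and x w :: "real vec" and \<alpha> :: real
  assumes X: "X \<in> carrier_mat n n" and Ps: "\<Psi> \<in> carrier_mat (2 * n + m) (2 * n + m)"
    and R: "R \<in> carrier_mat n n" and L: "L \<in> carrier_mat m n" and Z: "Z \<in> carrier_mat n n"
    and A: "A \<in> carrier_mat n n" and B: "B \<in> carrier_mat n m"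
    and x: "x \<in> carrier_vec n" and w: "w \<in> carrier_vec n"
    and ps: "psd (3 * n + m) (four_block_mat (four_block_mat X (0\<^sub>m n (n + m)) (0\<^sub>m (n + m) n) (0\<^sub>m (n + m) (n + m)))
        (0\<^sub>m n n @\<^sub>r R @\<^sub>r L) (transpose_mat (0\<^sub>m n n @\<^sub>r R @\<^sub>r L)) Z
        - \<alpha> \<cdot>\<^sub>m four_block_mat \<Psi> (0\<^sub>m (2 * n + m) n) (0\<^sub>m n (2 * n + m)) (0\<^sub>m n n))"
  shows "0 \<le> x \<bullet> (X *\<^sub>v x)
     - \<alpha> * ((x @\<^sub>v ((transpose_mat A *\<^sub>v x) @\<^sub>v (transpose_mat B *\<^sub>v x))) \<bullet>
              (\<Psi> *\<^sub>v (x @\<^sub>v ((transpose_mat A *\<^sub>v x) @\<^sub>v (transpose_mat B *\<^sub>v x)))))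
     + 2 * (x \<bullet> ((A * R + B * L) *\<^sub>v w)) + w \<bullet> (Z *\<^sub>v w)"
proof -
  define u' where "u' = (transpose_mat A *\<^sub>v x) @\<^sub>v (transpose_mat B *\<^sub>v x)"
  define u where "u = x @\<^sub>v u'"
  define TL where "TL = four_block_mat X (0\<^sub>m n (n + m)) (0\<^sub>m (n + m) n) (0\<^sub>m (n + m) (n + m))"
  define Col where "Col = 0\<^sub>m n n @\<^sub>r R @\<^sub>r L"
  define Big where "Big = four_block_mat TL Col (transpose_mat Col) Z"
  define PB where "PB = four_block_mat \<Psi> (0\<^sub>m (2 * n + m) n) (0\<^sub>m n (2 * n + m)) (0\<^sub>m n n)"
  define V where "V = u @\<^sub>v w"
  have u': "u' \<in> carrier_vec (n + m)" unfolding u'_def using A B x by auto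
  have u: "u \<in> carrier_vec (n + (n + m))" unfolding u_def using u' x by auto
  have TLc: "TL \<in> carrier_mat (n + (n + m)) (n + (n + m))" unfolding TL_def using X by auto
  have Colc: "Col \<in> carrier_mat (n + (n + m)) n" unfolding Col_def using R L by auto
  have Bigc: "Big \<in> carrier_mat (n + (n + m) + n) (n + (n + m) + n)" unfolding Big_def using TLc Colc Z by auto
  have e: "2 * n + m = n + (n + m)" by simp
  have Psc: "\<Psi> \<in> carrier_mat (n + (n + m)) (n + (n + m))" using Ps unfolding e .
  have z1: "0\<^sub>m (2 * n + m) n \<in> carrier_mat (n + (n + m)) n" unfolding e by (rule zero_carrier_mat)
  have z2: "0\<^sub>m n (2 * n + m) \<in> carrier_mat n (n + (n + m))" unfolding e by (rule zero_carrier_mat)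
  have PBc: "PB \<in> carrier_mat (n + (n + m) + n) (n + (n + m) + n)" unfolding PB_def using Psc z1 z2 by auto
  have V: "V \<in> carrier_vec (n + (n + m) + n)" unfolding V_def using u w by auto
  have e3: "n + (n + m) + n = 3 * n + m" by simp
  have V': "V \<in> carrier_vec (3 * n + m)" using V unfolding e3 .
  have "0 \<le> V \<bullet> ((Big - \<alpha> \<cdot>\<^sub>m PB) *\<^sub>v V)"
    using ps V' unfolding psd_def Big_def TL_def Col_def PB_def by auto
  also have "(Big - \<alpha> \<cdot>\<^sub>m PB) *\<^sub>v V = Big *\<^sub>v V - \<alpha> \<cdot>\<^sub>v (PB *\<^sub>v V)"
    using Bigc PBc V by (simp add: minus_mult_distrib_mat_vec[of _ "n + (n + m) + n" "n + (n + m) + n"] smult_mat_mult_vec)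
  also have "V \<bullet> (Big *\<^sub>v V - \<alpha> \<cdot>\<^sub>v (PB *\<^sub>v V)) = V \<bullet> (Big *\<^sub>v V) - \<alpha> * (V \<bullet> (PB *\<^sub>v V))"
    using Bigc PBc V by (simp add: scalar_prod_minus_distrib[of _ "n + (n + m) + n"])
  also have "V \<bullet> (PB *\<^sub>v V) = u \<bullet> (\<Psi> *\<^sub>v u)"
    unfolding V_def PB_def e
    by (subst quad_four_block[OF Psc zero_carrier_mat zero_carrier_mat zero_carrier_mat u w], insert u w, simp add: zero_mat_mult_vec)
  also have "V \<bullet> (Big *\<^sub>v V) = u \<bullet> (TL *\<^sub>v u) + u \<bullet> (Col *\<^sub>v w) + w \<bullet> (transpose_mat Col *\<^sub>v u) + w \<bullet> (Z *\<^sub>v w)"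
    unfolding V_def Big_def
    by (rule quad_four_block[OF TLc Colc _ Z u w], insert Colc, auto)
  also have "u \<bullet> (TL *\<^sub>v u) = x \<bullet> (X *\<^sub>v x)"
    unfolding u_def TL_def
    by (subst quad_four_block[OF X zero_carrier_mat zero_carrier_mat zero_carrier_mat x u'], insert x u', simp add: zero_mat_mult_vec)
  also have "w \<bullet> (transpose_mat Col *\<^sub>v u) = u \<bullet> (Col *\<^sub>v w)"
    using transpose_vec_mult_scalar[OF Colc w u] Colc u w by (simp add: comm_scalar_prod[of _ n])
  also have "u \<bullet> (Col *\<^sub>v w) = x \<bullet> ((A * R + B * L) *\<^sub>v w)"
  proof -
    have "Col *\<^sub>v w = 0\<^sub>v n @\<^sub>v ((R *\<^sub>v w) @\<^sub>v (L *\<^sub>v w))"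
      unfolding Col_def using R L w
      by (simp add: mat_mult_append[of _ n n _ "n + m"] mat_mult_append[of _ n n _ m] zero_mat_mult_vec)
    hence "u \<bullet> (Col *\<^sub>v w) = (transpose_mat A *\<^sub>v x) \<bullet> (R *\<^sub>v w) + (transpose_mat B *\<^sub>v x) \<bullet> (L *\<^sub>v w)"
      unfolding u_def u'_def using x A B R L w
      by (simp add: scalar_prod_append[of x n _ "n + m"] scalar_prod_append[of _ n _ m])
    also have "\<dots> = x \<bullet> (A *\<^sub>v (R *\<^sub>v w)) + x \<bullet> (B *\<^sub>v (L *\<^sub>v w))"
      using transpose_vec_mult_scalar[OF A _ x, of "R *\<^sub>v w"] transpose_vec_mult_scalar[OF B _ x, of "L *\<^sub>v w"] R L w
      by simp
    also have "\<dots> = x \<bullet> ((A * R + B * L) *\<^sub>v w)"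
      using A B R L w x by (simp add: add_mult_distrib_mat_vec[of _ n n] scalar_prod_add_distrib[of _ n])
    finally show ?thesis .
  qed
  finally show ?thesis unfolding u_def u'_def by simp
qed

lemma lmi2_eval:
  fixes Q CL Z :: "real mat" and y w :: "real vec"
  assumes Q: "Q \<in> carrier_mat q q" and CL: "CL \<in> carrier_mat q n" and Z: "Z \<in> carrier_mat n n"
    and y: "y \<in> carrier_vec q" and w: "w \<in> carrier_vec n"
    and ps: "psd (q + n) (four_block_mat Q CL (transpose_mat CL) Z)"
  shows "0 \<le> y \<bullet> (Q *\<^sub>v y) + 2 * (y \<bullet> (CL *\<^sub>v w)) + w \<bullet> (Z *\<^sub>v w)"
proof -
  have "0 \<le> (y @\<^sub>v w) \<bullet> (four_block_mat Q CL (transpose_mat CL) Z *\<^sub>v (y @\<^sub>v w))"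
    using ps y w unfolding psd_def by auto
  also have "\<dots> = y \<bullet> (Q *\<^sub>v y) + y \<bullet> (CL *\<^sub>v w) + w \<bullet> (transpose_mat CL *\<^sub>v y) + w \<bullet> (Z *\<^sub>v w)"
    by (rule quad_four_block[OF Q CL _ Z y w], insert CL, auto)
  also have "w \<bullet> (transpose_mat CL *\<^sub>v y) = y \<bullet> (CL *\<^sub>v w)"
    using transpose_vec_mult_scalar[OF CL w y] CL y w by (simp add: comm_scalar_prod[of _ n])
  finally show ?thesis by simp
qed

lemma sym_quad_swap:
  fixes P :: "real mat"
  assumes "P \<in> carrier_mat n n" "transpose_mat P = P" "x \<in> carrier_vec n" "y \<in> carrier_vec n"
  shows "x \<bullet> (P *\<^sub>v y) = y \<bullet> (P *\<^sub>v x)"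
proof -
  have "x \<bullet> (P *\<^sub>v y) = (transpose_mat P *\<^sub>v x) \<bullet> y"
    using transpose_vec_mult_scalar[OF assms(1) assms(4) assms(3)] by simp
  also have "\<dots> = y \<bullet> (P *\<^sub>v x)" using assms by (simp add: comm_scalar_prod[of _ n])
  finally show ?thesis .
qed

lemma schur_like:
  fixes P R Ri G :: "real mat" and y :: "real vec" and c :: real
  assumes P: "P \<in> carrier_mat n n" "transpose_mat P = P" "\<forall>v\<in>carrier_vec n. 0 \<le> v \<bullet> (P *\<^sub>v v)"
    and R: "R \<in> carrier_mat n n" "Ri \<in> carrier_mat n n" "R * Ri = 1\<^sub>m n"
    and G: "G \<in> carrier_mat p n" and y: "y \<in> carrier_vec p"
    and H: "\<forall>w\<in>carrier_vec n. 0 \<le> c + 2 * (y \<bullet> ((G * R) *\<^sub>v w)) + w \<bullet> ((R + transpose_mat R - P) *\<^sub>v w)"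
  shows "(transpose_mat G *\<^sub>v y) \<bullet> (P *\<^sub>v (transpose_mat G *\<^sub>v y)) \<le> c"
proof -
  define v where "v = transpose_mat G *\<^sub>v y"
  define w where "w = Ri *\<^sub>v (P *\<^sub>v v)"
  have v: "v \<in> carrier_vec n" unfolding v_def using G y by auto
  have Pv: "P *\<^sub>v v \<in> carrier_vec n" using P v by auto
  have w: "w \<in> carrier_vec n" unfolding w_def using R P v by auto
  have Rw: "R *\<^sub>v w = P *\<^sub>v v"
    unfolding w_def using R P v by (simp flip: assoc_mult_mat_vec[of R n n Ri n])
  define s where "s = v \<bullet> (P *\<^sub>v v)"
  have ws: "w \<bullet> (P *\<^sub>v v) = v \<bullet> (P *\<^sub>v w)" using sym_quad_swap[OF P(1,2) w v] .
  have lin: "y \<bullet> ((G * R) *\<^sub>v w) = s"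
  proof -
    have "y \<bullet> ((G * R) *\<^sub>v w) = y \<bullet> (G *\<^sub>v (P *\<^sub>v v))" using G R w Rw by simp
    also have "\<dots> = v \<bullet> (P *\<^sub>v v)"
      using transpose_vec_mult_scalar[OF G Pv y] unfolding v_def by simp
    finally show ?thesis unfolding s_def .
  qed
  have mw: "(-1) \<cdot>\<^sub>v w \<in> carrier_vec n" using w by auto
  have Zc: "R + transpose_mat R - P \<in> carrier_mat n n" using R P by auto
  have GRc: "G * R \<in> carrier_mat p n" using G R by auto
  have e1: "((-1) \<cdot>\<^sub>v w) \<bullet> ((R + transpose_mat R - P) *\<^sub>v ((-1) \<cdot>\<^sub>v w)) = w \<bullet> ((R + transpose_mat R - P) *\<^sub>v w)"
    using mult_mat_vec[OF Zc w, of "-1"] Zc w by simp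
  have e2: "y \<bullet> ((G * R) *\<^sub>v ((-1) \<cdot>\<^sub>v w)) = - s"
    using mult_mat_vec[OF GRc w, of "-1"] GRc y lin w by simp
  from H[rule_format, OF mw]
  have h: "0 \<le> c - 2 * s + w \<bullet> ((R + transpose_mat R - P) *\<^sub>v w)"
    unfolding e1 e2 by simp
  have Zw: "w \<bullet> ((R + transpose_mat R - P) *\<^sub>v w) = 2 * (w \<bullet> (P *\<^sub>v v)) - w \<bullet> (P *\<^sub>v w)"
  proof -
    have e: "(R + transpose_mat R - P) *\<^sub>v w = R *\<^sub>v w + transpose_mat R *\<^sub>v w - P *\<^sub>v w"
      using R P w by (simp add: add_mult_distrib_mat_vec[of _ n n] minus_mult_distrib_mat_vec[of _ n n])
    have t: "w \<bullet> (transpose_mat R *\<^sub>v w) = w \<bullet> (P *\<^sub>v v)"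
    proof -
      have "w \<bullet> (transpose_mat R *\<^sub>v w) = (R *\<^sub>v w) \<bullet> w"
        using transpose_vec_mult_scalar[of "transpose_mat R" n n w w] R w by simp
      also have "\<dots> = w \<bullet> (P *\<^sub>v v)" using Rw Pv w by (simp add: comm_scalar_prod[of _ n])
      finally show ?thesis .
    qed
    show ?thesis unfolding e using R P w Rw t v Pv
      by (simp add: scalar_prod_add_distrib[of _ n] scalar_prod_minus_distrib[of _ n])
  qed
  have pos: "0 \<le> (w - v) \<bullet> (P *\<^sub>v (w - v))" using P(3) w v by auto
  have "(w - v) \<bullet> (P *\<^sub>v (w - v)) = w \<bullet> (P *\<^sub>v w) - 2 * (w \<bullet> (P *\<^sub>v v)) + s"
    using P w v ws unfolding s_def
    by (simp add: mult_minus_distrib_mat_vec[of _ n n] scalar_prod_minus_distrib[of _ n]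
        minus_scalar_prod_distrib[of _ n])
  with pos h Zw have "s \<le> c" by linarith
  thus ?thesis unfolding s_def v_def .
qed

lemma pow_mat_Suc_left:
  fixes G :: "real mat"
  assumes "G \<in> carrier_mat n n"
  shows "G ^\<^sub>m Suc t = G * G ^\<^sub>m t"
proof (induction t)
  case 0 then show ?case using assms by simp
next
  case (Suc t)
  have "G ^\<^sub>m Suc (Suc t) = (G * G ^\<^sub>m t) * G" using Suc by simp
  also have "\<dots> = G * (G ^\<^sub>m t * G)" using assms by (simp add: assoc_mult_mat[of _ n n _ n _ n])
  finally show ?case by simp
qed

lemma transpose_unit_row:
  fixes M :: "real mat"
  assumes "M \<in> carrier_mat q c" "i < q"
  shows "transpose_mat M *\<^sub>v unit_vec q i = row M i"
  using assms by (intro eq_vecI, auto)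

lemma frob_sq_rows:
  fixes M :: "real mat"
  assumes "M \<in> carrier_mat q c"
  shows "frob_sq M = (\<Sum>i<q. (transpose_mat M *\<^sub>v unit_vec q i) \<bullet> (transpose_mat M *\<^sub>v unit_vec q i))"
  unfolding frob_sq_def using assms
  by (intro sum.cong, auto simp: transpose_unit_row scalar_prod_def power2_eq_square atLeast0LessThan)

lemma quad_unit:
  fixes Q :: "real mat"
  assumes "Q \<in> carrier_mat q q" "i < q"
  shows "unit_vec q i \<bullet> (Q *\<^sub>v unit_vec q i) = Q $$ (i, i)"
  using assms by simp

lemma h2_bound:
  fixes P G E Ck Q :: "real mat"
  assumes P: "P \<in> carrier_mat n n" "\<forall>v\<in>carrier_vec n. 0 \<le> v \<bullet> (P *\<^sub>v v)"
    and G: "G \<in> carrier_mat n n" and E: "E \<in> carrier_mat n z"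
    and Ck: "Ck \<in> carrier_mat q n" and Q: "Q \<in> carrier_mat q q"
    and step: "\<forall>x\<in>carrier_vec n. (transpose_mat G *\<^sub>v x) \<bullet> (P *\<^sub>v (transpose_mat G *\<^sub>v x))
                 + (transpose_mat E *\<^sub>v x) \<bullet> (transpose_mat E *\<^sub>v x) \<le> x \<bullet> (P *\<^sub>v x)"
    and out: "\<forall>y\<in>carrier_vec q. (transpose_mat Ck *\<^sub>v y) \<bullet> (P *\<^sub>v (transpose_mat Ck *\<^sub>v y)) \<le> y \<bullet> (Q *\<^sub>v y)"
  shows "(\<Sum>t<N. frob_sq (Ck * G ^\<^sub>m t * E)) \<le> trace_mat Q"
proof -
  define f where "f N y = (\<Sum>t<N. (transpose_mat (G ^\<^sub>m t * E) *\<^sub>v y) \<bullet> (transpose_mat (G ^\<^sub>m t * E) *\<^sub>v y))" for N y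
  have fb: "\<forall>y\<in>carrier_vec n. f N y \<le> y \<bullet> (P *\<^sub>v y)" for N
  proof (induction N)
    case 0 then show ?case using P by (simp add: f_def)
  next
    case (Suc N)
    show ?case
    proof
      fix y :: "real vec" assume y: "y \<in> carrier_vec n"
      have Gy: "transpose_mat G *\<^sub>v y \<in> carrier_vec n" using G y by auto
      have e: "transpose_mat (G ^\<^sub>m Suc t * E) *\<^sub>v y = transpose_mat (G ^\<^sub>m t * E) *\<^sub>v (transpose_mat G *\<^sub>v y)" for t
      proof -
        have "G ^\<^sub>m Suc t * E = G * (G ^\<^sub>m t * E)"
          unfolding pow_mat_Suc_left[OF G] using G E by (intro assoc_mult_mat[of _ n n _ n _ z], auto)
        hence "transpose_mat (G ^\<^sub>m Suc t * E) = transpose_mat (G * (G ^\<^sub>m t * E))" by (simp only:)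
        also have "\<dots> = transpose_mat (G ^\<^sub>m t * E) * transpose_mat G"
          using G E by (intro transpose_mult[of _ n n _ z], auto)
        finally have "transpose_mat (G ^\<^sub>m Suc t * E) = transpose_mat (G ^\<^sub>m t * E) * transpose_mat G" .
        thus ?thesis by (simp only:) (rule assoc_mult_mat_vec[of _ z n _ n], insert G E y, auto)
      qed
      have e0: "G ^\<^sub>m 0 * E = E" using G E by simp
      have "f (Suc N) y = (transpose_mat E *\<^sub>v y) \<bullet> (transpose_mat E *\<^sub>v y) + f N (transpose_mat G *\<^sub>v y)"
        unfolding f_def sum.lessThan_Suc_shift e e0 by simp
      also have "\<dots> \<le> (transpose_mat E *\<^sub>v y) \<bullet> (transpose_mat E *\<^sub>v y) + (transpose_mat G *\<^sub>v y) \<bullet> (P *\<^sub>v (transpose_mat G *\<^sub>v y))"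
        using Suc.IH Gy by simp
      also have "\<dots> \<le> y \<bullet> (P *\<^sub>v y)" using step y by (simp add: add.commute)
      finally show "f (Suc N) y \<le> y \<bullet> (P *\<^sub>v y)" .
    qed
  qed
  define yv where "yv i = transpose_mat Ck *\<^sub>v unit_vec q i" for i
  have yv: "yv i \<in> carrier_vec n" for i unfolding yv_def using Ck by auto
  have fr: "frob_sq (Ck * G ^\<^sub>m t * E) = (\<Sum>i<q. (transpose_mat (G ^\<^sub>m t * E) *\<^sub>v yv i) \<bullet> (transpose_mat (G ^\<^sub>m t * E) *\<^sub>v yv i))" for t
  proof -
    have M: "Ck * G ^\<^sub>m t * E \<in> carrier_mat q z" using Ck G E by auto
    have "transpose_mat (Ck * G ^\<^sub>m t * E) *\<^sub>v unit_vec q i = transpose_mat (G ^\<^sub>m t * E) *\<^sub>v yv i" for i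
    proof -
      have "Ck * G ^\<^sub>m t * E = Ck * (G ^\<^sub>m t * E)" using Ck G E by (simp add: assoc_mult_mat[of _ q n _ n _ z])
      hence "transpose_mat (Ck * G ^\<^sub>m t * E) = transpose_mat (Ck * (G ^\<^sub>m t * E))" by (simp only:)
      also have "\<dots> = transpose_mat (G ^\<^sub>m t * E) * transpose_mat Ck"
        using Ck G E by (intro transpose_mult[of _ q n _ z], auto)
      finally have "transpose_mat (Ck * G ^\<^sub>m t * E) = transpose_mat (G ^\<^sub>m t * E) * transpose_mat Ck" .
      thus ?thesis unfolding yv_def by (simp only:) (rule assoc_mult_mat_vec[of _ z n _ q], insert G E Ck, auto)
    qed
    thus ?thesis by (simp add: frob_sq_rows[OF M])
  qed
  have "(\<Sum>t<N. frob_sq (Ck * G ^\<^sub>m t * E)) = (\<Sum>i<q. f N (yv i))"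
    unfolding fr f_def by (rule sum.swap)
  also have "\<dots> \<le> (\<Sum>i<q. yv i \<bullet> (P *\<^sub>v yv i))" using fb yv by (intro sum_mono, auto)
  also have "\<dots> \<le> (\<Sum>i<q. Q $$ (i, i))"
  proof (intro sum_mono)
    fix i assume i: "i \<in> {..<q}"
    show "yv i \<bullet> (P *\<^sub>v yv i) \<le> Q $$ (i, i)"
      using out[rule_format, of "unit_vec q i"] quad_unit[OF Q, of i] i unfolding yv_def by simp
  qed
  also have "\<dots> = trace_mat Q" unfolding trace_mat_def using Q by simp
  finally show ?thesis .
qed

lemma sum_div_mod_split:
  fixes g :: "nat \<Rightarrow> real"
  shows "(\<Sum>b<n * k. g b) = (\<Sum>i<k. \<Sum>r<n. g (i * n + r))"
proof -
  have "(\<Sum>b<n * k. g b) = (\<Sum>i<k. sum g {i * n..<i * n + n})"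
    using sum.nat_group[of g n k] by (simp add: mult.commute)
  also have "\<dots> = (\<Sum>i<k. \<Sum>r<n. g (i * n + r))"
  proof (rule sum.cong[OF refl])
    fix i assume "i \<in> {..<k}"
    show "sum g {i * n..<i * n + n} = (\<Sum>r<n. g (i * n + r))"
      using sum.atLeastLessThan_shift_0[of g "i * n" "i * n + n"] by (simp add: atLeast0LessThan comp_def)
  qed
  finally show ?thesis .
qed

lemma lt_bound:
  fixes i k r n :: nat
  assumes "i < k" "r < n" shows "i * n + r < n * k"
proof -
  have "i * n + r < (i + 1) * n" using assms by simp
  also have "\<dots> \<le> k * n" using assms by (intro mult_le_mono1) auto
  finally show ?thesis by (simp add: mult.commute)
qed

lemma index_mult_sum:
  fixes A B :: "real mat"
  assumes "A \<in> carrier_mat a b" "B \<in> carrier_mat b c" "i < a" "j < c"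
  shows "(A * B) $$ (i, j) = (\<Sum>r<b. A $$ (i, r) * B $$ (r, j))"
  using assms by (simp add: scalar_prod_def atLeast0LessThan)

lemma upsilon_extract:
  fixes R :: "real mat"
  assumes basis: "is_basis_of k Ss m n \<S>" and RU: "R \<in> Upsilon k n (rep_mat k Ss m n)"
  shows "\<exists>\<Lambda>. \<Lambda> \<in> carrier_mat k k \<and> (\<forall>j<k. \<forall>a<m. \<forall>s<n.
            (Ss j * R) $$ (a, s) = (\<Sum>i<k. \<Lambda> $$ (i, j) * Ss i $$ (a, s)))"
proof -
  from RU obtain \<Lambda> where R: "R \<in> carrier_mat n n" and L: "sym_mat k \<Lambda>"
    and eq: "rep_mat k Ss m n * kron (1\<^sub>m k) R = rep_mat k Ss m n * kron \<Lambda> (1\<^sub>m n)"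
    unfolding Upsilon_def by auto
  have Lc: "\<Lambda> \<in> carrier_mat k k" using L unfolding sym_mat_def by auto
  have Ssc: "Ss l \<in> carrier_mat m n" if "l < k" for l using basis that unfolding is_basis_of_def by auto
  have Sc: "rep_mat k Ss m n \<in> carrier_mat m (n * k)" unfolding rep_mat_def by auto
  have K1: "kron (1\<^sub>m k) R \<in> carrier_mat (n * k) (n * k)" using R unfolding kron_def by (auto simp: mult.commute)
  have K2: "kron \<Lambda> (1\<^sub>m n) \<in> carrier_mat (n * k) (n * k)" using Lc unfolding kron_def by (auto simp: mult.commute)
  have "(Ss j * R) $$ (a, s) = (\<Sum>i<k. \<Lambda> $$ (i, j) * Ss i $$ (a, s))"
    if j: "j < k" and a: "a < m" and s: "s < n" for j a s
  proof -
    have c: "j * n + s < n * k" using lt_bound[OF j s] .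
    have n0: "0 < n" using s by auto
    have dm: "(j * n + s) div n = j" "(j * n + s) mod n = s" using n0 s by auto
    have ir: "i * n + r < n * k" if "i < k" "r < n" for i r using lt_bound that .
    have ir': "i * n + r < k * n" if "i < k" "r < n" for i r using lt_bound that by (simp add: mult.commute)
    have c': "j * n + s < k * n" using c by (simp add: mult.commute)
    have dm2: "(i * n + r) div n = i" "(i * n + r) mod n = r" if "r < n" for i r using that by auto
    have "(rep_mat k Ss m n * kron (1\<^sub>m k) R) $$ (a, j * n + s)
        = (\<Sum>i<k. \<Sum>r<n. Ss i $$ (a, r) * ((1\<^sub>m k) $$ (i, j) * R $$ (r, s)))"
      apply (subst index_mult_sum[OF Sc K1 a c])
      apply (subst sum_div_mod_split)
      apply (intro sum.cong refl)
      using ir ir' c' dm dm2 R a unfolding rep_mat_def kron_def by auto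
    also have "\<dots> = (\<Sum>r<n. Ss j $$ (a, r) * R $$ (r, s))"
    proof -
      have "(\<Sum>i<k. \<Sum>r<n. Ss i $$ (a, r) * ((1\<^sub>m k) $$ (i, j) * R $$ (r, s)))
          = (\<Sum>i<k. if i = j then (\<Sum>r<n. Ss j $$ (a, r) * R $$ (r, s)) else 0)"
        by (intro sum.cong refl, insert j, auto)
      also have "\<dots> = (\<Sum>r<n. Ss j $$ (a, r) * R $$ (r, s))" using j by simp
      finally show ?thesis .
    qed
    also have "\<dots> = (Ss j * R) $$ (a, s)" using index_mult_sum[OF Ssc[OF j] R a s] by simp
    finally have l: "(rep_mat k Ss m n * kron (1\<^sub>m k) R) $$ (a, j * n + s) = (Ss j * R) $$ (a, s)" .
    have "(rep_mat k Ss m n * kron \<Lambda> (1\<^sub>m n)) $$ (a, j * n + s)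
        = (\<Sum>i<k. \<Sum>r<n. Ss i $$ (a, r) * (\<Lambda> $$ (i, j) * (1\<^sub>m n) $$ (r, s)))"
      apply (subst index_mult_sum[OF Sc K2 a c])
      apply (subst sum_div_mod_split)
      apply (intro sum.cong refl)
      using ir ir' c' dm dm2 Lc a s j unfolding rep_mat_def kron_def by auto
    also have "\<dots> = (\<Sum>i<k. \<Lambda> $$ (i, j) * Ss i $$ (a, s))"
    proof (intro sum.cong refl)
      fix i assume "i \<in> {..<k}"
      have "(\<Sum>r<n. Ss i $$ (a, r) * (\<Lambda> $$ (i, j) * (1\<^sub>m n) $$ (r, s)))
          = (\<Sum>r<n. if r = s then \<Lambda> $$ (i, j) * Ss i $$ (a, s) else 0)"
        by (intro sum.cong refl, insert s, auto)
      also have "\<dots> = \<Lambda> $$ (i, j) * Ss i $$ (a, s)" using s by simp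
      finally show "(\<Sum>r<n. Ss i $$ (a, r) * (\<Lambda> $$ (i, j) * (1\<^sub>m n) $$ (r, s))) = \<Lambda> $$ (i, j) * Ss i $$ (a, s)" .
    qed
    finally show ?thesis using l eq by simp
  qed
  thus ?thesis using Lc by blast
qed

lemma subspace_inv:
  fixes R Ri L \<Lambda> :: "real mat"
  assumes basis: "is_basis_of k Ss m n \<S>" and Lc: "\<Lambda> \<in> carrier_mat k k"
    and ext: "\<forall>j<k. \<forall>a<m. \<forall>s<n. (Ss j * R) $$ (a, s) = (\<Sum>i<k. \<Lambda> $$ (i, j) * Ss i $$ (a, s))"
    and R: "R \<in> carrier_mat n n" "Ri \<in> carrier_mat n n" "R * Ri = 1\<^sub>m n"
    and L: "L \<in> \<S>"
  shows "L * Ri \<in> \<S>"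
proof -
  have Ssc: "Ss l \<in> carrier_mat m n" if "l < k" for l using basis that unfolding is_basis_of_def by auto
  have indep: "mat_lin_indep k Ss m n" and Sdef: "\<S> = mat_span k Ss m n"
    using basis unfolding is_basis_of_def by auto
  define lin where "lin d = mat m n (\<lambda>(a, s). \<Sum>l<k. d $ l * Ss l $$ (a, s))" for d :: "real vec"
  have linc: "lin d \<in> carrier_mat m n" for d unfolding lin_def by auto
  have f1: "lin d * R = lin (\<Lambda> *\<^sub>v d)" if d: "d \<in> carrier_vec k" for d
  proof (rule eq_matI)
    fix a s assume a: "a < dim_row (lin (\<Lambda> *\<^sub>v d))" and s: "s < dim_col (lin (\<Lambda> *\<^sub>v d))"
    hence a: "a < m" and s: "s < n" unfolding lin_def by auto
    have "(lin d * R) $$ (a, s) = (\<Sum>r<n. lin d $$ (a, r) * R $$ (r, s))"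
      using index_mult_sum[OF linc R(1) a s] .
    also have "\<dots> = (\<Sum>r<n. \<Sum>l<k. d $ l * (Ss l $$ (a, r) * R $$ (r, s)))"
      unfolding lin_def using a by (simp add: sum_distrib_right mult.assoc)
    also have "\<dots> = (\<Sum>l<k. d $ l * (\<Sum>r<n. Ss l $$ (a, r) * R $$ (r, s)))"
      by (subst sum.swap, simp add: sum_distrib_left)
    also have "\<dots> = (\<Sum>l<k. d $ l * (\<Sum>i<k. \<Lambda> $$ (i, l) * Ss i $$ (a, s)))"
    proof (rule sum.cong[OF refl])
      fix l assume l: "l \<in> {..<k}"
      have "(\<Sum>r<n. Ss l $$ (a, r) * R $$ (r, s)) = (Ss l * R) $$ (a, s)"
        using index_mult_sum[OF Ssc R(1) a s] l by simp
      also have "\<dots> = (\<Sum>i<k. \<Lambda> $$ (i, l) * Ss i $$ (a, s))" using ext l a s by auto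
      finally show "d $ l * (\<Sum>r<n. Ss l $$ (a, r) * R $$ (r, s)) = d $ l * (\<Sum>i<k. \<Lambda> $$ (i, l) * Ss i $$ (a, s))"
        by simp
    qed
    also have "\<dots> = (\<Sum>l<k. \<Sum>i<k. d $ l * (\<Lambda> $$ (i, l) * Ss i $$ (a, s)))"
      by (simp add: sum_distrib_left)
    also have "\<dots> = (\<Sum>i<k. \<Sum>l<k. d $ l * (\<Lambda> $$ (i, l) * Ss i $$ (a, s)))"
      by (rule sum.swap)
    also have "\<dots> = (\<Sum>i<k. (\<Sum>l<k. \<Lambda> $$ (i, l) * d $ l) * Ss i $$ (a, s))"
      by (rule sum.cong[OF refl], subst sum_distrib_right, rule sum.cong[OF refl], simp)
    also have "\<dots> = lin (\<Lambda> *\<^sub>v d) $$ (a, s)"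
      unfolding lin_def using a s Lc d by (simp add: scalar_prod_def atLeast0LessThan)
    finally show "(lin d * R) $$ (a, s) = lin (\<Lambda> *\<^sub>v d) $$ (a, s)" .
  qed (use R in \<open>auto simp: lin_def\<close>)
  have f2: "lin d * R * Ri = lin d" for d
    using linc[of d] R by (simp add: assoc_mult_mat[of _ m n _ n _ n])
  have inj: "d = 0\<^sub>v k" if d: "d \<in> carrier_vec k" and z: "\<Lambda> *\<^sub>v d = 0\<^sub>v k" for d
  proof -
    have "lin (\<Lambda> *\<^sub>v d) = 0\<^sub>m m n" unfolding z lin_def by (intro eq_matI, auto)
    hence "lin d * R = 0\<^sub>m m n" using f1[OF d] by simp
    hence "lin d * R * Ri = 0\<^sub>m m n * Ri" by simp
    hence "lin d = 0\<^sub>m m n * Ri" using f2[of d] by simp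
    hence "lin d = 0\<^sub>m m n" using R by simp
    hence "\<forall>l<k. d $ l = 0" using indep unfolding mat_lin_indep_def lin_def by blast
    thus ?thesis using d by (intro eq_vecI, auto)
  qed
  have "det \<Lambda> \<noteq> 0"
    using inj unfolding det_0_iff_vec_prod_zero[OF Lc] by blast
  note dnz = this
  obtain \<Lambda>i where Li: "\<Lambda> * \<Lambda>i = 1\<^sub>m k" "\<Lambda>i \<in> carrier_mat k k"
  proof (cases "mat_inverse \<Lambda>")
    case None
    from mat_inverse(1)[OF Lc None, where b="()"] det_non_zero_imp_unit[OF Lc dnz, where b="()"] show ?thesis by blast
  next
    case (Some B)
    with mat_inverse(2)[OF Lc Some] show ?thesis using that by blast
  qed
  from L obtain c where Lm: "L = mat m n (\<lambda>(i, j). \<Sum>l<k. c l * Ss l $$ (i, j))"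
    unfolding Sdef mat_span_def by auto
  have Lin: "L = lin (vec k c)" unfolding Lm lin_def by (intro eq_matI, auto)
  define d where "d = \<Lambda>i *\<^sub>v vec k c"
  have d: "d \<in> carrier_vec k" unfolding d_def using Li by auto
  have "\<Lambda> *\<^sub>v d = vec k c" unfolding d_def using Li Lc
    by (simp flip: assoc_mult_mat_vec[of \<Lambda> k k \<Lambda>i k])
  hence "L = lin d * R" using f1[OF d] Lin by simp
  hence "L * Ri = lin d" using f2 by simp
  thus ?thesis unfolding Sdef mat_span_def lin_def by auto
qed

lemma self_sp_nonneg: "0 \<le> (v :: real vec) \<bullet> v"
  unfolding scalar_prod_def by (intro sum_nonneg, auto)

lemma self_sp_pos:
  fixes v :: "real vec"
  assumes "v \<in> carrier_vec n" "v \<noteq> 0\<^sub>v n"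
  shows "0 < v \<bullet> v"
proof -
  obtain i where i: "i < n" "v $ i \<noteq> 0" using assms by (metis eq_vecI carrier_vecD index_zero_vec(1,2))
  have "v $ i * v $ i \<le> (\<Sum>j\<in>{0..<dim_vec v}. v $ j * v $ j)"
    using i assms by (intro member_le_sum, auto)
  moreover have "0 < v $ i * v $ i" by (metis i(2) not_real_square_gt_zero)
  ultimately show ?thesis unfolding scalar_prod_def by simp
qed

lemma mat_vec_zero_right: "(A :: real mat) \<in> carrier_mat nr nc \<Longrightarrow> A *\<^sub>v 0\<^sub>v nc = 0\<^sub>v nr"
  by (intro eq_vecI, auto)

lemma X_quad:
  fixes P E :: "real mat"
  assumes "P \<in> carrier_mat n n" "E \<in> carrier_mat n z" "x \<in> carrier_vec n"
  shows "x \<bullet> ((P - E * transpose_mat E - \<beta> \<cdot>\<^sub>m 1\<^sub>m n) *\<^sub>v x)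
       = x \<bullet> (P *\<^sub>v x) - (transpose_mat E *\<^sub>v x) \<bullet> (transpose_mat E *\<^sub>v x) - \<beta> * (x \<bullet> x)"
proof -
  have EE: "E * transpose_mat E \<in> carrier_mat n n" using assms by auto
  have "(P - E * transpose_mat E - \<beta> \<cdot>\<^sub>m 1\<^sub>m n) *\<^sub>v x = P *\<^sub>v x - E *\<^sub>v (transpose_mat E *\<^sub>v x) - \<beta> \<cdot>\<^sub>v x"
  proof -
    have c1: "P - E * transpose_mat E \<in> carrier_mat n n" using assms EE by auto
    have c2: "\<beta> \<cdot>\<^sub>m 1\<^sub>m n \<in> carrier_mat n n" by auto
    have "(P - E * transpose_mat E - \<beta> \<cdot>\<^sub>m 1\<^sub>m n) *\<^sub>v x = (P - E * transpose_mat E) *\<^sub>v x - (\<beta> \<cdot>\<^sub>m 1\<^sub>m n) *\<^sub>v x"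
      by (rule minus_mult_distrib_mat_vec[OF c1 c2 assms(3)])
    also have "(P - E * transpose_mat E) *\<^sub>v x = P *\<^sub>v x - (E * transpose_mat E) *\<^sub>v x"
      by (rule minus_mult_distrib_mat_vec[OF assms(1) EE assms(3)])
    also have "(E * transpose_mat E) *\<^sub>v x = E *\<^sub>v (transpose_mat E *\<^sub>v x)"
      using assms by (intro assoc_mult_mat_vec[of _ n z _ n], auto)
    also have "(\<beta> \<cdot>\<^sub>m 1\<^sub>m n) *\<^sub>v x = \<beta> \<cdot>\<^sub>v x"
      using smult_mat_mult_vec[OF one_carrier_mat assms(3)] assms(3) by simp
    finally show ?thesis .
  qed
  moreover have "x \<bullet> (E *\<^sub>v (transpose_mat E *\<^sub>v x)) = (transpose_mat E *\<^sub>v x) \<bullet> (transpose_mat E *\<^sub>v x)"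
    using transpose_vec_mult_scalar[of E n z "transpose_mat E *\<^sub>v x" x] assms by simp
  ultimately show ?thesis using assms
    by (simp add: scalar_prod_minus_distrib[of _ n])
qed

theorem theorem1:
  fixes n m T q z k :: nat
    and Xm Um Xp Ast Bst Wm \<Phi> \<Phi>11 \<Phi>12 \<Phi>22 C D E :: "real mat"
    and Ss :: "nat \<Rightarrow> real mat" and \<S> :: "real mat set"
    and P Q R L :: "real mat" and \<alpha> \<beta> \<gamma>opt :: real
  assumes data: "Xm \<in> carrier_mat n T" "Um \<in> carrier_mat m T" "Xp \<in> carrier_mat n T"
    and truesys: "Ast \<in> carrier_mat n n" "Bst \<in> carrier_mat n m" "Wm \<in> carrier_mat n T"
      "Xp = Ast * Xm + Bst * Um + Wm"
    and Phi: "sym_mat (n + T) \<Phi>" "\<Phi>11 \<in> carrier_mat n n" "\<Phi>12 \<in> carrier_mat n T"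
      "\<Phi>22 \<in> carrier_mat T T" "\<Phi> = four_block_mat \<Phi>11 \<Phi>12 (transpose_mat \<Phi>12) \<Phi>22"
      "psd n \<Phi>11" "neg_def T \<Phi>22"
    and noise: "psd n (append_cols (1\<^sub>m n) Wm * \<Phi> * transpose_mat (append_cols (1\<^sub>m n) Wm))"
    and CDE: "C \<in> carrier_mat q n" "D \<in> carrier_mat q m" "E \<in> carrier_mat n z"
    and basis: "is_basis_of k Ss m n \<S>"
    and feas: "sdp_feasible n m q k C D E (Psi_mat n m T Xp Xm Um \<Phi>) \<S> (rep_mat k Ss m n)
                 P Q R L \<alpha> \<beta> \<gamma>opt"
    and opt: "\<And>P' Q' R' L' \<alpha>' \<beta>' \<gamma>'.
                sdp_feasible n m q k C D E (Psi_mat n m T Xp Xm Um \<Phi>) \<S> (rep_mat k Ss m n)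
                  P' Q' R' L' \<alpha>' \<beta>' \<gamma>' \<Longrightarrow> \<gamma>opt \<le> \<gamma>'"
  shows "L * the (mat_inverse R) \<in> \<S> \<and>
         (\<forall>A B. (A, B) \<in> Sigma_D n m (Psi_mat n m T Xp Xm Um \<Phi>) \<longrightarrow>
            h2_suboptimal A B C D E (L * the (mat_inverse R)) \<gamma>opt)"
proof -
  let ?Psi = "Psi_mat n m T Xp Xm Um \<Phi>"
  let ?SS = "rep_mat k Ss m n"
  let ?Z = "R + transpose_mat R - P"
  let ?X = "P - E * transpose_mat E - \<beta> \<cdot>\<^sub>m 1\<^sub>m n"
  from feas have Psym: "sym_mat n P" and Qsym: "sym_mat q Q" and RU: "R \<in> Upsilon k n ?SS"
    and LS: "L \<in> \<S>"
    and lmi1: "psd (3 * n + m) (four_block_mat (four_block_mat ?X (0\<^sub>m n (n + m)) (0\<^sub>m (n + m) n) (0\<^sub>m (n + m) (n + m)))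
        (0\<^sub>m n n @\<^sub>r R @\<^sub>r L) (transpose_mat (0\<^sub>m n n @\<^sub>r R @\<^sub>r L)) ?Z
        - \<alpha> \<cdot>\<^sub>m four_block_mat ?Psi (0\<^sub>m (2 * n + m) n) (0\<^sub>m n (2 * n + m)) (0\<^sub>m n n))"
    and lmi2: "psd (q + n) (four_block_mat Q (C * R + D * L) (transpose_mat (C * R + D * L)) ?Z)"
    and trQ: "trace_mat Q \<le> \<gamma>opt\<^sup>2" and al: "\<alpha> \<ge> 0" and be: "\<beta> > 0" and ga: "\<gamma>opt \<ge> 0"
    unfolding sdp_feasible_def Let_def by auto
  have Pc: "P \<in> carrier_mat n n" and PT: "transpose_mat P = P" using Psym unfolding sym_mat_def by auto
  have Qc: "Q \<in> carrier_mat q q" using Qsym unfolding sym_mat_def by auto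
  have Rc: "R \<in> carrier_mat n n" using RU unfolding Upsilon_def by auto
  have Lc: "L \<in> carrier_mat m n" using LS basis unfolding is_basis_of_def mat_span_def by auto
  have Phc: "\<Phi> \<in> carrier_mat (n + T) (n + T)" using Phi(1) unfolding sym_mat_def by auto
  have Psic': "?Psi \<in> carrier_mat (n + (n + m)) (n + (n + m))"
  proof -
    let ?X1 = "append_cols (1\<^sub>m n) Xp" and ?X2 = "append_cols (0\<^sub>m n n) (- Xm)"
      and ?X3 = "append_cols (0\<^sub>m m n) (- Um)"
    have X1: "?X1 \<in> carrier_mat n (n + T)" using data by auto
    have X2: "?X2 \<in> carrier_mat n (n + T)" using data by auto
    have X3: "?X3 \<in> carrier_mat m (n + T)" using data by auto
    have X23: "?X2 @\<^sub>r ?X3 \<in> carrier_mat (n + m) (n + T)" using X2 X3 by auto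
    have Mc: "?X1 @\<^sub>r ?X2 @\<^sub>r ?X3 \<in> carrier_mat (n + (n + m)) (n + T)" using X1 X23 by auto
    show ?thesis
      unfolding Psi_mat_def Let_def using Mc Phc by auto
  qed
  have e2: "2 * n + m = n + (n + m)" by simp
  have Psic: "?Psi \<in> carrier_mat (2 * n + m) (2 * n + m)" using Psic' unfolding e2 .
  have Xc: "?X \<in> carrier_mat n n" using Pc CDE by auto
  have Zc: "?Z \<in> carrier_mat n n" using Pc Rc by auto
  have key1: "0 \<le> x \<bullet> (P *\<^sub>v x) - (transpose_mat E *\<^sub>v x) \<bullet> (transpose_mat E *\<^sub>v x) - \<beta> * (x \<bullet> x)
      + 2 * (x \<bullet> ((A * R + B * L) *\<^sub>v w)) + w \<bullet> (?Z *\<^sub>v w)"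
    if AB: "(A, B) \<in> Sigma_D n m ?Psi" and x: "x \<in> carrier_vec n" and w: "w \<in> carrier_vec n" for A B x w
  proof -
    have A: "A \<in> carrier_mat n n" and B: "B \<in> carrier_mat n m" using AB unfolding Sigma_D_def by auto
    note ev = lmi1_eval[OF Xc Psic Rc Lc Zc A B x w lmi1]
    note sq = sigma_quad[OF AB Psic' x]
    have "0 \<le> \<alpha> * ((x @\<^sub>v ((transpose_mat A *\<^sub>v x) @\<^sub>v (transpose_mat B *\<^sub>v x))) \<bullet>
              (?Psi *\<^sub>v (x @\<^sub>v ((transpose_mat A *\<^sub>v x) @\<^sub>v (transpose_mat B *\<^sub>v x)))))"
      using al sq by simp
    with ev X_quad[OF Pc CDE(3) x, of \<beta>] show ?thesis by linarith
  qed
  have sstar: "(Ast, Bst) \<in> Sigma_D n m ?Psi"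
    by (rule sigma_star[OF data truesys Phi(1) noise])
  have Ppos: "0 < x \<bullet> (P *\<^sub>v x)" if x: "x \<in> carrier_vec n" "x \<noteq> 0\<^sub>v n" for x
  proof -
    have z: "0\<^sub>v n \<in> carrier_vec n" by simp
    have ABc: "Ast * R + Bst * L \<in> carrier_mat n n" using truesys Rc Lc by auto
    from key1[OF sstar x(1) z] have "0 \<le> x \<bullet> (P *\<^sub>v x) - (transpose_mat E *\<^sub>v x) \<bullet> (transpose_mat E *\<^sub>v x) - \<beta> * (x \<bullet> x)"
      using ABc Zc x by (simp add: mat_vec_zero_right)
    moreover have "0 < \<beta> * (x \<bullet> x)" using be self_sp_pos[OF x] by simp
    moreover have "0 \<le> (transpose_mat E *\<^sub>v x) \<bullet> (transpose_mat E *\<^sub>v x)" by (rule self_sp_nonneg)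
    ultimately show ?thesis by linarith
  qed
  have Ppsd: "\<forall>v\<in>carrier_vec n. 0 \<le> v \<bullet> (P *\<^sub>v v)"
  proof
    fix v :: "real vec" assume v: "v \<in> carrier_vec n"
    show "0 \<le> v \<bullet> (P *\<^sub>v v)"
    proof (cases "v = 0\<^sub>v n")
      case True thus ?thesis using Pc by simp
    next
      case False thus ?thesis using Ppos[OF v] by simp
    qed
  qed
  have detR: "det R \<noteq> 0"
  proof
    assume "det R = 0"
    then obtain v where v: "v \<in> carrier_vec n" "v \<noteq> 0\<^sub>v n" "R *\<^sub>v v = 0\<^sub>v n"
      unfolding det_0_iff_vec_prod_zero[OF Rc] by blast
    have z: "0\<^sub>v n \<in> carrier_vec n" by simp
    have ABc: "Ast * R + Bst * L \<in> carrier_mat n n" using truesys Rc Lc by auto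
    from key1[OF sstar z v(1)] have h: "0 \<le> v \<bullet> (?Z *\<^sub>v v)" using ABc v(1) truesys CDE Pc by (simp add: mat_vec_zero_right)
    have "?Z *\<^sub>v v = R *\<^sub>v v + transpose_mat R *\<^sub>v v - P *\<^sub>v v"
      using Rc Pc v(1) by (simp add: add_mult_distrib_mat_vec[of _ n n] minus_mult_distrib_mat_vec[of _ n n])
    moreover have "v \<bullet> (transpose_mat R *\<^sub>v v) = (R *\<^sub>v v) \<bullet> v"
      using transpose_vec_mult_scalar[of "transpose_mat R" n n v v] Rc v(1) by simp
    ultimately have "v \<bullet> (?Z *\<^sub>v v) = - (v \<bullet> (P *\<^sub>v v))"
      using v Rc Pc by (simp add: scalar_prod_add_distrib[of _ n] scalar_prod_minus_distrib[of _ n])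
    with h Ppos[OF v(1,2)] show False by linarith
  qed
  obtain Ri where Ri: "mat_inverse R = Some Ri" "R * Ri = 1\<^sub>m n" "Ri * R = 1\<^sub>m n" "Ri \<in> carrier_mat n n"
  proof (cases "mat_inverse R")
    case None
    from mat_inverse(1)[OF Rc None, where b="()"] det_non_zero_imp_unit[OF Rc detR, where b="()"] show ?thesis by blast
  next
    case (Some B)
    with mat_inverse(2)[OF Rc Some] show ?thesis using that by blast
  qed
  define K where "K = L * Ri"
  have Kdef: "L * the (mat_inverse R) = K" unfolding K_def Ri(1) by simp
  have Kc: "K \<in> carrier_mat m n" unfolding K_def using Lc Ri by auto
  have KR: "K * R = L"
    unfolding K_def using Lc Ri Rc by (simp add: assoc_mult_mat[of _ m n _ n _ n])
  have part1: "K \<in> \<S>"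
  proof -
    obtain \<Lambda> where "\<Lambda> \<in> carrier_mat k k" and "\<forall>j<k. \<forall>a<m. \<forall>s<n.
            (Ss j * R) $$ (a, s) = (\<Sum>i<k. \<Lambda> $$ (i, j) * Ss i $$ (a, s))"
      using upsilon_extract[OF basis RU] by blast
    from subspace_inv[OF basis this Rc Ri(4) Ri(2) LS] show ?thesis unfolding K_def .
  qed
  have part2: "h2_suboptimal A B C D E K \<gamma>opt" if AB: "(A, B) \<in> Sigma_D n m ?Psi" for A B
  proof -
    have A: "A \<in> carrier_mat n n" and B: "B \<in> carrier_mat n m" using AB unfolding Sigma_D_def by auto
    define G where "G = A + B * K"
    define Ck where "Ck = C + D * K"
    have Gc: "G \<in> carrier_mat n n" unfolding G_def using A B Kc by auto
    have Ckc: "Ck \<in> carrier_mat q n" unfolding Ck_def using CDE Kc by auto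
    have GR: "G * R = A * R + B * L"
    proof -
      have "G * R = A * R + B * K * R" unfolding G_def using A B Kc Rc
        by (simp add: add_mult_distrib_mat[of _ n n _ _ n])
      also have "B * K * R = B * L" using B Kc Rc KR by (simp add: assoc_mult_mat[of _ n m _ n _ n])
      finally show ?thesis .
    qed
    have CkR: "Ck * R = C * R + D * L"
    proof -
      have "Ck * R = C * R + D * K * R" unfolding Ck_def using CDE Kc Rc
        by (simp add: add_mult_distrib_mat[of _ q n _ _ n])
      also have "D * K * R = D * L" using CDE Kc Rc KR by (simp add: assoc_mult_mat[of _ q m _ n _ n])
      finally show ?thesis .
    qed
    have step: "\<forall>x\<in>carrier_vec n. (transpose_mat G *\<^sub>v x) \<bullet> (P *\<^sub>v (transpose_mat G *\<^sub>v x))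
                 + (transpose_mat E *\<^sub>v x) \<bullet> (transpose_mat E *\<^sub>v x) \<le> x \<bullet> (P *\<^sub>v x)"
    proof
      fix x :: "real vec" assume x: "x \<in> carrier_vec n"
      have "(transpose_mat G *\<^sub>v x) \<bullet> (P *\<^sub>v (transpose_mat G *\<^sub>v x)) \<le>
         x \<bullet> (P *\<^sub>v x) - (transpose_mat E *\<^sub>v x) \<bullet> (transpose_mat E *\<^sub>v x) - \<beta> * (x \<bullet> x)"
        by (rule schur_like[OF Pc PT Ppsd Rc Ri(4) Ri(2) Gc x], unfold GR, use key1[OF AB x] in auto)
      moreover have "0 \<le> \<beta> * (x \<bullet> x)" using be self_sp_nonneg[of x] by simp
      ultimately show "(transpose_mat G *\<^sub>v x) \<bullet> (P *\<^sub>v (transpose_mat G *\<^sub>v x))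
                 + (transpose_mat E *\<^sub>v x) \<bullet> (transpose_mat E *\<^sub>v x) \<le> x \<bullet> (P *\<^sub>v x)" by linarith
    qed
    have CL: "C * R + D * L \<in> carrier_mat q n" using CDE Rc Lc by auto
    have out: "\<forall>y\<in>carrier_vec q. (transpose_mat Ck *\<^sub>v y) \<bullet> (P *\<^sub>v (transpose_mat Ck *\<^sub>v y)) \<le> y \<bullet> (Q *\<^sub>v y)"
    proof
      fix y :: "real vec" assume y: "y \<in> carrier_vec q"
      show "(transpose_mat Ck *\<^sub>v y) \<bullet> (P *\<^sub>v (transpose_mat Ck *\<^sub>v y)) \<le> y \<bullet> (Q *\<^sub>v y)"
        by (rule schur_like[OF Pc PT Ppsd Rc Ri(4) Ri(2) Ckc y], unfold CkR,
            use lmi2_eval[OF Qc CL Zc y _ lmi2] in auto)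
    qed
    have bnd: "(\<Sum>t<N. frob_sq (markov A B C D E K t)) \<le> \<gamma>opt\<^sup>2" for N
    proof -
      have "(\<Sum>t<N. frob_sq (markov A B C D E K t)) = (\<Sum>t<N. frob_sq (Ck * G ^\<^sub>m t * E))"
        unfolding markov_def G_def Ck_def ..
      also have "\<dots> \<le> trace_mat Q" by (rule h2_bound[OF Pc Ppsd Gc CDE(3) Ckc Qc step out])
      finally show ?thesis using trQ by linarith
    qed
    have nn: "0 \<le> frob_sq M" for M unfolding frob_sq_def by (intro sum_nonneg, auto)
    have sm: "summable (\<lambda>t. frob_sq (markov A B C D E K t))"
      by (rule summableI_nonneg_bounded[OF nn bnd])
    have "(\<Sum>t. frob_sq (markov A B C D E K t)) \<le> \<gamma>opt\<^sup>2" by (rule suminf_le_const[OF sm bnd])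
    hence "h2_norm A B C D E K \<le> sqrt (\<gamma>opt\<^sup>2)" unfolding h2_norm_def by (rule real_sqrt_le_mono)
    hence "h2_norm A B C D E K \<le> \<gamma>opt" using ga by simp
    thus ?thesis unfolding h2_suboptimal_def h2_finite_def using sm by simp
  qed
  show ?thesis unfolding Kdef using part1 part2 by blast
qed

end
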